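(* Let $\{B_t : t\ge 0\}$ be an adapted fuzzy set--valued stochastic process on $(\Omega,\mathcal F,\{\mathcal F_t\},\mathbb P)$ with values in $\mathcal F_{kc}(\mathbb R^d)$. Then $\{B_t\}_{t\ge 0}$ is a fuzzy set--valued Brownian motion if and only if there exists a Wiener process $\{b_t : t\ge 0\}$ in $\mathbb R^d$ such that, for every $t\ge 0$, \[ B_t = \mathbf 1_{\{b_t\}} \qquad \mathbb P\text{-a.s.}, \] where $\mathbf 1_{\{a\}}:\mathbb R^d\to\{0,1\}$ is the indicator function of the singleton $\{a\}$.
   Context: $(\Omega,\mathcal F,\mathbb P)$ is a complete probability space with a filtration $\{\mathcal F_t\}_{t\ge0}$ satisfying the usual conditions. A fuzzy set is a map $\nu:\mathbb R^d\to[0,1]$. $\mathcal F_{kc}(\mathbb R^d)$ is the family of fuzzy sets $\nu$ such that: - every level set $\nu_\alpha=\{x:\nu(x)\ge\alpha\}$, $\alpha\in(0,1]$, is closed; - $\nu_1\neq\emptyset$; - the support $\nu_{0+}=\overline{\{x:\nu(x)>0\}}$ is compact; - every $\nu_\alpha$ is convex. Operations are defined levelwise by $(\nu^1\oplus\nu^2)_\alpha=\nu^1_\alpha+\nu^2_\alpha$ (Minkowski sum) and $(\lambda\nu)_\alpha=\lambda\nu_\alpha$. A fuzzy set--valued random variable is a map $X:\Omega\to\mathcal F_{kc}(\mathbb R^d)$ such that each $\omega\mapsto X(\omega)_\alpha$, $\alpha\in(0,1]$, is a random compact convex set, i.e. measurable with respect to the Borel $\sigma$-algebra of the Hausdorff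 metric. The process is adapted if each $B_t$ is $\mathcal F_t$-measurable. Let $S^{d-1}$ be the unit sphere of $\mathbb R^d$ and $C(S^{d-1})$ the continuous functions on it with the sup norm. $\overline{\mathbf C}$ denotes the Banach space of functions $f:[0,1]\to C(S^{d-1})$ that are bounded, left continuous on $(0,1]$, right continuous at $0$, and have right limits on $(0,1)$, with norm $\|f\|=\sup_{\alpha}\|f(\alpha)\|_{C}$. The support function of $\nu\in\mathcal F_{kc}(\mathbb R^d)$ is the element $s_\nu\in\overline{\mathbf C}$ given by $s_\nu(x,\alpha)=\sup\{\langle x,a\rangle : a\in\nu_\alpha\}$ for $\alpha>0$, and by the same formula with $\nu_{0+}$ in place of $\nu_\alpha$ for $\alpha=0$. The map $\nu\mapsto s_\nu$ is an isometric embedding of $\mathcal F_{kc}(\mathbb R^d)$ into $\overline{\mathbf C}$ (with the metric $d_\infty(\nu^1,\nu^2)=\sup_\alpha d_H(\nu^1_\alpha,\nu^2_\alpha)$), is additive and positively homogeneous, and has closed image. A process is a fuzzy set--valued Brownian motion if $\{s_{B_t}\}_{t\ge0}$ is a Brownian motion in $\overline{\mathbf C}$. This means it is a Gaussian process starting at $0$, i.e. $B_0=\mathbf 1_{\{0\}}$, with $\mathbb E[f(s_{B_t})]=0$ for all $t\ge0$ and all $f\in\overline{\mathbf C}^*$, independent increments, and covariances of the form $(t\wedge s)$ times a fixed covariance. Here a process $\{s_{B_t}\}$ is Gaussian if for every $n$ and all $f_1,\dots,f_n\in\overline{\mathbf C}^*$ the real process $\{(f_1(s_{B_t}),\dots,f_n(s_{B_t}))\}_t$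 is Gaussian. A Wiener process in $\mathbb R^d$ is a centered Gaussian process with $b_0=0$ and independent Gaussian increments whose covariance is $(t-s)$ times a fixed covariance matrix. *)

theory Defs
  imports "HOL-Probability.Probability"
begin

definition level :: "('a::euclidean_space \<Rightarrow> real) \<Rightarrow> real \<Rightarrow> 'a set" where
  "level \<nu> \<alpha> = (if \<alpha> = 0 then closure {x. \<nu> x > 0} else {x. \<nu> x \<ge> \<alpha>})"

definition Fkc :: "('a::euclidean_space \<Rightarrow> real) \<Rightarrow> bool" where
  "Fkc \<nu> \<longleftrightarrow> (\<forall>x. 0 \<le> \<nu> x \<and> \<nu> x \<le> 1)
     \<and> (\<forall>\<alpha>\<in>{0<..1}. closed (level \<nu> \<alpha>))
     \<and> level \<nu> 1 \<noteq> {}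
     \<and> compact (level \<nu> 0)
     \<and> (\<forall>\<alpha>\<in>{0<..1}. convex (level \<nu> \<alpha>))"

definition supp_fun :: "('a::euclidean_space \<Rightarrow> real) \<Rightarrow> real \<Rightarrow> 'a \<Rightarrow> real" where
  "supp_fun \<nu> \<alpha> x = Sup ((\<lambda>a. inner x a) ` level \<nu> \<alpha>)"

definition Cbar :: "(real \<Rightarrow> 'a::euclidean_space \<Rightarrow> real) set" where
  "Cbar = {g.
     (\<forall>\<alpha>\<in>{0..1}. continuous_on (sphere 0 1) (g \<alpha>))
   \<and> (\<exists>K. \<forall>\<alpha>\<in>{0..1}. \<forall>x\<in>sphere 0 1. \<bar>g \<alpha> x\<bar> \<le> K)
   \<and> (\<forall>\<alpha>\<in>{0<..1}. \<forall>e>0. \<exists>\<delta>>0. \<forall>\<beta>\<in>{0..1}. \<alpha> - \<delta> < \<beta> \<and> \<beta> \<le> \<alpha> \<longrightarrow>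
          (\<forall>x\<in>sphere 0 1. \<bar>g \<beta> x - g \<alpha> x\<bar> < e))
   \<and> (\<forall>e>0. \<exists>\<delta>>0. \<forall>\<beta>\<in>{0..1}. \<beta> < \<delta> \<longrightarrow>
          (\<forall>x\<in>sphere 0 1. \<bar>g \<beta> x - g 0 x\<bar> < e))
   \<and> (\<forall>\<alpha>\<in>{0<..<1}. \<exists>h. \<forall>e>0. \<exists>\<delta>>0. \<forall>\<beta>\<in>{0..1}. \<alpha> < \<beta> \<and> \<beta> < \<alpha> + \<delta> \<longrightarrow>
          (\<forall>x\<in>sphere 0 1. \<bar>g \<beta> x - h x\<bar> < e))}"

definition Cbar_norm :: "(real \<Rightarrow> 'a::euclidean_space \<Rightarrow> real) \<Rightarrow> real" where
  "Cbar_norm g = (SUP p\<in>{0..1} \<times> sphere (0::'a) 1. \<bar>g (fst p) (snd p)\<bar>)"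

definition Cbar_dual :: "((real \<Rightarrow> 'a::euclidean_space \<Rightarrow> real) \<Rightarrow> real) set" where
  "Cbar_dual = {f.
     (\<forall>g\<in>Cbar. \<forall>h\<in>Cbar. f (\<lambda>\<alpha> x. g \<alpha> x + h \<alpha> x) = f g + f h)
   \<and> (\<forall>g\<in>Cbar. \<forall>c::real. f (\<lambda>\<alpha> x. c * g \<alpha> x) = c * f g)
   \<and> (\<exists>K. \<forall>g\<in>Cbar. \<bar>f g\<bar> \<le> K * Cbar_norm g)}"

definition real_gaussian :: "'w measure \<Rightarrow> ('w \<Rightarrow> real) \<Rightarrow> bool" where
  "real_gaussian M X \<longleftrightarrow> X \<in> borel_measurable M \<and>
     (\<exists>\<mu> \<sigma>::real. (\<sigma> = 0 \<and> distr M borel X = return borel \<mu>)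
                 \<or> (\<sigma> > 0 \<and> distributed M lborel X (normal_density \<mu> \<sigma>)))"

definition gaussian_family :: "'w measure \<Rightarrow> 'i set \<Rightarrow> ('i \<Rightarrow> 'w \<Rightarrow> real) \<Rightarrow> bool" where
  "gaussian_family M I X \<longleftrightarrow> (\<forall>i\<in>I. X i \<in> borel_measurable M) \<and>
     (\<forall>c. real_gaussian M (\<lambda>\<omega>. \<Sum>i\<in>I. c i * X i \<omega>))"

definition gaussian_vec_process :: "'w measure \<Rightarrow> nat \<Rightarrow> (real \<Rightarrow> nat \<Rightarrow> 'w \<Rightarrow> real) \<Rightarrow> bool" where
  "gaussian_vec_process M n Y \<longleftrightarrow>
     (\<forall>S. finite S \<and> S \<subseteq> {0..} \<longrightarrow> gaussian_family M (S \<times> {..<n}) (\<lambda>(t,k). Y t k))"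

definition Cbar_BM :: "'w measure \<Rightarrow> (real \<Rightarrow> 'w \<Rightarrow> (real \<Rightarrow> 'a::euclidean_space \<Rightarrow> real)) \<Rightarrow> bool" where
  "Cbar_BM M X \<longleftrightarrow>
     \<comment> \<open>Gaussian process\<close>
     (\<forall>n (fs :: nat \<Rightarrow> (real \<Rightarrow> 'a \<Rightarrow> real) \<Rightarrow> real). (\<forall>k<n. fs k \<in> Cbar_dual) \<longrightarrow>
        gaussian_vec_process M n (\<lambda>t k \<omega>. fs k (X t \<omega>)))
   \<comment> \<open>starting at 0\<close>
   \<and> (AE \<omega> in M. \<forall>\<alpha>\<in>{0..1}. \<forall>x\<in>sphere 0 1. X 0 \<omega> \<alpha> x = 0)
   \<comment> \<open>centered\<close>
   \<and> (\<forall>t\<ge>0. \<forall>f\<in>Cbar_dual. integrable M (\<lambda>\<omega>. f (X t \<omega>)) \<and>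
          prob_space.expectation M (\<lambda>\<omega>. f (X t \<omega>)) = 0)
   \<comment> \<open>independent increments (w.r.t. the sigma-algebras generated by the dual functionals)\<close>
   \<and> (\<forall>n (t :: nat \<Rightarrow> real). 0 \<le> t 0 \<and> (\<forall>k<n. t k < t (Suc k)) \<longrightarrow>
        prob_space.indep_sets M
          (\<lambda>k. sigma_sets (space M)
             {(\<lambda>\<omega>. f (\<lambda>\<alpha> x. X (t (Suc k)) \<omega> \<alpha> x - X (t k) \<omega> \<alpha> x)) -` A \<inter> space M | f A.
                f \<in> Cbar_dual \<and> A \<in> sets borel}) {..<n})
   \<comment> \<open>covariance (s min t) times a fixed covariance\<close>
   \<and> (\<exists>R. \<forall>f\<in>Cbar_dual. \<forall>g\<in>Cbar_dual. \<forall>s\<ge>0. \<forall>t\<ge>0.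
        integrable M (\<lambda>\<omega>. f (X t \<omega>) * g (X s \<omega>)) \<and>
        prob_space.expectation M (\<lambda>\<omega>. f (X t \<omega>) * g (X s \<omega>)) = min t s * R f g)"

definition fuzzy_BM :: "'w measure \<Rightarrow> (real \<Rightarrow> 'w \<Rightarrow> ('a::euclidean_space \<Rightarrow> real)) \<Rightarrow> bool" where
  "fuzzy_BM M B \<longleftrightarrow> Cbar_BM M (\<lambda>t \<omega>. supp_fun (B t \<omega>))"

definition Kc :: "'a::euclidean_space set set" where
  "Kc = {K. compact K \<and> convex K \<and> K \<noteq> {}}"

definition hausdist :: "'a::euclidean_space set \<Rightarrow> 'a set \<Rightarrow> real" where
  "hausdist A B = max (SUP a\<in>A. infdist a B) (SUP b\<in>B. infdist b A)"

definition Kc_borel :: "'a::euclidean_space set measure" where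
  "Kc_borel = sigma Kc {U. U \<subseteq> Kc \<and>
      (\<forall>K\<in>U. \<exists>e>0. \<forall>K'\<in>Kc. hausdist K K' < e \<longrightarrow> K' \<in> U)}"

definition usual_filtration :: "'w measure \<Rightarrow> (real \<Rightarrow> 'w measure) \<Rightarrow> bool" where
  "usual_filtration M F \<longleftrightarrow>
     (\<forall>t\<ge>0. space (F t) = space M \<and> sets (F t) \<subseteq> sets M)
   \<and> (\<forall>s t. 0 \<le> s \<and> s \<le> t \<longrightarrow> sets (F s) \<subseteq> sets (F t))
   \<and> null_sets M \<subseteq> sets (F 0)
   \<and> (\<forall>t\<ge>0. sets (F t) = (\<Inter>s\<in>{t<..}. sets (F s)))"

definition adapted_fuzzy_process ::
  "'w measure \<Rightarrow> (real \<Rightarrow> 'w measure) \<Rightarrow> (real \<Rightarrow> 'w \<Rightarrow> ('a::euclidean_space \<Rightarrow> real)) \<Rightarrow> bool" where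
  "adapted_fuzzy_process M F B \<longleftrightarrow>
     (\<forall>t\<ge>0. \<forall>\<omega>\<in>space M. Fkc (B t \<omega>))
   \<and> (\<forall>t\<ge>0. \<forall>\<alpha>\<in>{0<..1}. (\<lambda>\<omega>. level (B t \<omega>) \<alpha>) \<in> measurable (F t) Kc_borel)"

definition wiener_process :: "'w measure \<Rightarrow> (real \<Rightarrow> 'w \<Rightarrow> 'a::euclidean_space) \<Rightarrow> bool" where
  "wiener_process M b \<longleftrightarrow>
     (\<forall>t\<ge>0. b t \<in> borel_measurable M)
   \<and> (\<forall>\<omega>\<in>space M. b 0 \<omega> = 0)
   \<comment> \<open>Gaussian process\<close>
   \<and> (\<forall>S. finite S \<and> S \<subseteq> {0..} \<longrightarrow>
        gaussian_family M (S \<times> Basis) (\<lambda>(t,i) \<omega>. inner (b t \<omega>) i))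
   \<comment> \<open>centered\<close>
   \<and> (\<forall>t\<ge>0. \<forall>v. integrable M (\<lambda>\<omega>. inner (b t \<omega>) v) \<and>
          prob_space.expectation M (\<lambda>\<omega>. inner (b t \<omega>) v) = 0)
   \<comment> \<open>independent increments\<close>
   \<and> (\<forall>n (t :: nat \<Rightarrow> real). 0 \<le> t 0 \<and> (\<forall>k<n. t k < t (Suc k)) \<longrightarrow>
        prob_space.indep_vars M (\<lambda>_. borel) (\<lambda>k \<omega>. b (t (Suc k)) \<omega> - b (t k) \<omega>) {..<n})
   \<comment> \<open>Gaussian increments with covariance (t - s) Q for a fixed covariance matrix Q\<close>
   \<and> (\<exists>Q. linear Q \<and> (\<forall>s t u v. 0 \<le> s \<and> s \<le> t \<longrightarrow>
        real_gaussian M (\<lambda>\<omega>. inner (b t \<omega> - b s \<omega>) u) \<and>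
        integrable M (\<lambda>\<omega>. inner (b t \<omega> - b s \<omega>) u * inner (b t \<omega> - b s \<omega>) v) \<and>
        prob_space.expectation M (\<lambda>\<omega>. inner (b t \<omega> - b s \<omega>) u * inner (b t \<omega> - b s \<omega>) v)
          = (t - s) * inner u (Q v)))"

end

theory Submission
  imports Defs
begin


lemma Cbar_bound:
  assumes "g \<in> Cbar"
  shows "\<exists>K. \<forall>\<alpha>\<in>{0..1}. \<forall>x\<in>sphere (0::'a::euclidean_space) 1. \<bar>g \<alpha> x\<bar> \<le> K"
  using assms unfolding Cbar_def mem_Collect_eq by (elim conjE) assumption

lemma Cbar_le_norm:
  assumes "g \<in> Cbar" "\<alpha> \<in> {0..1}" "x \<in> sphere (0::'a::euclidean_space) 1"
  shows "\<bar>g \<alpha> x\<bar> \<le> Cbar_norm g"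
proof -
  from Cbar_bound[OF assms(1)] obtain K where K: "\<forall>\<alpha>\<in>{0..1}. \<forall>x\<in>sphere (0::'a) 1. \<bar>g \<alpha> x\<bar> \<le> K"
    by blast
  have bdd: "bdd_above ((\<lambda>p. \<bar>g (fst p) (snd p)\<bar>) ` ({0..1} \<times> sphere (0::'a) 1))"
    by (rule bdd_aboveI2[where M=K]) (use K in force)
  have mem: "(\<alpha>, x) \<in> {0..1} \<times> sphere (0::'a) 1" using assms by simp
  show ?thesis unfolding Cbar_norm_def
    using cSUP_upper[OF mem bdd] by simp
qed

lemma Cbar_norm_zero:
  assumes "\<forall>\<alpha>\<in>{0..1}. \<forall>x\<in>sphere (0::'a::euclidean_space) 1. g \<alpha> x = 0"
  shows "Cbar_norm g = 0"
proof -
  obtain i :: 'a where "i \<in> Basis" using nonempty_Basis by blast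
  then have i: "(0, i) \<in> {0..1::real} \<times> sphere (0::'a) 1" by auto
  have "(\<lambda>p. \<bar>g (fst p) (snd p)\<bar>) ` ({0..1} \<times> sphere (0::'a) 1) = {0}"
  proof (rule equalityI)
    show "{0} \<subseteq> (\<lambda>p. \<bar>g (fst p) (snd p)\<bar>) ` ({0..1} \<times> sphere (0::'a) 1)"
      using rev_image_eqI[OF i, of 0 "\<lambda>p. \<bar>g (fst p) (snd p)\<bar>"] assms i by auto
  qed (use assms in auto)
  then show ?thesis unfolding Cbar_norm_def by simp
qed

lemma Cbar_zero_on:
  assumes z: "\<forall>\<alpha>\<in>{0..1}. \<forall>x\<in>sphere (0::'a::euclidean_space) 1. g \<alpha> x = 0"
  shows "g \<in> Cbar"
proof -
  have c: "\<forall>\<alpha>\<in>{0..1}. continuous_on (sphere (0::'a) 1) (g \<alpha>)"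
  proof
    fix \<alpha> :: real assume a: "\<alpha> \<in> {0..1}"
    have "continuous_on (sphere (0::'a) 1) (\<lambda>x. 0::real)" by simp
    moreover have "\<And>x. x \<in> sphere (0::'a) 1 \<Longrightarrow> (\<lambda>x. 0::real) x = g \<alpha> x" using z a by auto
    ultimately show "continuous_on (sphere (0::'a) 1) (g \<alpha>)"
      by (rule continuous_on_eq)
  qed
  have b: "\<exists>K. \<forall>\<alpha>\<in>{0..1::real}. \<forall>x\<in>sphere (0::'a) 1. \<bar>g \<alpha> x\<bar> \<le> K"
    using z by (intro exI[where x=0]) simp
  have l: "\<forall>\<alpha>\<in>{0<..1::real}. \<forall>e>0. \<exists>\<delta>>0. \<forall>\<beta>\<in>{0..1}. \<alpha> - \<delta> < \<beta> \<and> \<beta> \<le> \<alpha> \<longrightarrow>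
          (\<forall>x\<in>sphere (0::'a) 1. \<bar>g \<beta> x - g \<alpha> x\<bar> < e)"
  proof (intro ballI allI impI)
    fix \<alpha> e :: real assume "\<alpha> \<in> {0<..1}" "0 < e"
    then show "\<exists>\<delta>>0. \<forall>\<beta>\<in>{0..1}. \<alpha> - \<delta> < \<beta> \<and> \<beta> \<le> \<alpha> \<longrightarrow>
          (\<forall>x\<in>sphere (0::'a) 1. \<bar>g \<beta> x - g \<alpha> x\<bar> < e)"
      using z by (intro exI[where x=1]) simp
  qed
  have r0: "\<forall>e>0. \<exists>\<delta>>0. \<forall>\<beta>\<in>{0..1::real}. \<beta> < \<delta> \<longrightarrow>
          (\<forall>x\<in>sphere (0::'a) 1. \<bar>g \<beta> x - g 0 x\<bar> < e)"
  proof (intro allI impI)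
    fix e :: real assume "0 < e"
    then show "\<exists>\<delta>>0. \<forall>\<beta>\<in>{0..1::real}. \<beta> < \<delta> \<longrightarrow>
          (\<forall>x\<in>sphere (0::'a) 1. \<bar>g \<beta> x - g 0 x\<bar> < e)"
      using z by (intro exI[where x=1]) simp
  qed
  have rl: "\<forall>\<alpha>\<in>{0<..<1::real}. \<exists>h. \<forall>e>0. \<exists>\<delta>>0. \<forall>\<beta>\<in>{0..1}. \<alpha> < \<beta> \<and> \<beta> < \<alpha> + \<delta> \<longrightarrow>
          (\<forall>x\<in>sphere (0::'a) 1. \<bar>g \<beta> x - h x\<bar> < e)"
  proof (intro ballI exI[where x="\<lambda>x. 0"] allI impI)
    fix \<alpha> e :: real assume "0 < e"
    then show "\<exists>\<delta>>0. \<forall>\<beta>\<in>{0..1}. \<alpha> < \<beta> \<and> \<beta> < \<alpha> + \<delta> \<longrightarrow>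
          (\<forall>x\<in>sphere (0::'a) 1. \<bar>g \<beta> x - 0\<bar> < e)"
      using z by (intro exI[where x=1]) simp
  qed
  show ?thesis using b c l r0 rl unfolding Cbar_def mem_Collect_eq by (intro conjI) assumption+
qed

definition psi :: "'a::euclidean_space \<Rightarrow> real \<Rightarrow> 'a \<Rightarrow> real" where
  "psi c = (\<lambda>\<alpha> x. inner x c)"

lemma psi_Cbar: "psi c \<in> Cbar"
proof -
  have b: "\<forall>\<alpha>\<in>{0..1::real}. \<forall>x\<in>sphere (0::'a) 1. \<bar>psi c \<alpha> x\<bar> \<le> norm c"
  proof (intro ballI)
    fix \<alpha> :: real and x :: 'a assume "x \<in> sphere 0 1"
    then have "norm x = 1" by simp
    then show "\<bar>psi c \<alpha> x\<bar> \<le> norm c" unfolding psi_def using Cauchy_Schwarz_ineq2[of x c] by simp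
  qed
  then have b: "\<exists>K. \<forall>\<alpha>\<in>{0..1::real}. \<forall>x\<in>sphere (0::'a) 1. \<bar>psi c \<alpha> x\<bar> \<le> K" by blast
  have c: "\<forall>\<alpha>\<in>{0..1::real}. continuous_on (sphere (0::'a) 1) (psi c \<alpha>)"
    unfolding psi_def by (auto intro!: continuous_intros)
  have l: "\<forall>\<alpha>\<in>{0<..1::real}. \<forall>e>0. \<exists>\<delta>>0. \<forall>\<beta>\<in>{0..1}. \<alpha> - \<delta> < \<beta> \<and> \<beta> \<le> \<alpha> \<longrightarrow>
          (\<forall>x\<in>sphere (0::'a) 1. \<bar>psi c \<beta> x - psi c \<alpha> x\<bar> < e)"
    unfolding psi_def by (auto intro!: exI[where x=1])
  have r0: "\<forall>e>0. \<exists>\<delta>>0. \<forall>\<beta>\<in>{0..1::real}. \<beta> < \<delta> \<longrightarrow>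
          (\<forall>x\<in>sphere (0::'a) 1. \<bar>psi c \<beta> x - psi c 0 x\<bar> < e)"
    unfolding psi_def by (auto intro!: exI[where x=1])
  have rl: "\<forall>\<alpha>\<in>{0<..<1::real}. \<exists>h. \<forall>e>0. \<exists>\<delta>>0. \<forall>\<beta>\<in>{0..1}. \<alpha> < \<beta> \<and> \<beta> < \<alpha> + \<delta> \<longrightarrow>
          (\<forall>x\<in>sphere (0::'a) 1. \<bar>psi c \<beta> x - h x\<bar> < e)"
    unfolding psi_def by (intro ballI exI[where x="\<lambda>x. inner x c"]) (auto intro!: exI[where x=1])
  show ?thesis using b c l r0 rl unfolding Cbar_def mem_Collect_eq by (intro conjI) assumption+
qed

lemma dual_agree:
  assumes f: "f \<in> Cbar_dual" and h: "h \<in> Cbar"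
    and agree: "\<forall>\<alpha>\<in>{0..1}. \<forall>x\<in>sphere (0::'a::euclidean_space) 1. g \<alpha> x = h \<alpha> x"
  shows "f g = f h"
proof -
  define d where "d = (\<lambda>\<alpha> x. g \<alpha> x - h \<alpha> x)"
  have dz: "\<forall>\<alpha>\<in>{0..1}. \<forall>x\<in>sphere (0::'a) 1. d \<alpha> x = 0" using agree by (simp add: d_def)
  have d: "d \<in> Cbar" by (rule Cbar_zero_on[OF dz])
  have "g = (\<lambda>\<alpha> x. h \<alpha> x + d \<alpha> x)" by (simp add: d_def)
  then have "f g = f h + f d" using f h d unfolding Cbar_dual_def by auto
  moreover obtain K where "\<forall>g\<in>Cbar. \<bar>f g\<bar> \<le> K * Cbar_norm g" using f unfolding Cbar_dual_def by blast
  then have "\<bar>f d\<bar> \<le> K * Cbar_norm d" using d by blast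
  then have "f d = 0" using Cbar_norm_zero[OF dz] by simp
  ultimately show ?thesis by simp
qed

definition lev :: "'a set \<Rightarrow> ('a \<Rightarrow> real) \<Rightarrow> (real \<Rightarrow> 'a::euclidean_space \<Rightarrow> real) \<Rightarrow> real" where
  "lev J w g = (\<Sum>x\<in>J. w x * g 0 x)"

lemma lev_dual:
  assumes "finite J" "J \<subseteq> sphere 0 1"
  shows "lev J w \<in> Cbar_dual"
proof -
  have "\<bar>lev J w g\<bar> \<le> (\<Sum>x\<in>J. \<bar>w x\<bar>) * Cbar_norm g" if g: "g \<in> Cbar" for g
  proof -
    have "\<bar>lev J w g\<bar> \<le> (\<Sum>x\<in>J. \<bar>w x * g 0 x\<bar>)" unfolding lev_def by (rule sum_abs)
    also have "\<dots> \<le> (\<Sum>x\<in>J. \<bar>w x\<bar> * Cbar_norm g)"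
      by (rule sum_mono) (use Cbar_le_norm[OF g] assms in \<open>auto simp: abs_mult intro!: mult_left_mono\<close>)
    also have "\<dots> = (\<Sum>x\<in>J. \<bar>w x\<bar>) * Cbar_norm g" by (simp add: sum_distrib_right)
    finally show ?thesis .
  qed
  then have "\<exists>K. \<forall>g\<in>Cbar. \<bar>lev J w g\<bar> \<le> K * Cbar_norm g" by blast
  moreover have "\<forall>g\<in>Cbar. \<forall>h\<in>Cbar. lev J w (\<lambda>\<alpha> x. g \<alpha> x + h \<alpha> x) = lev J w g + lev J w h"
    unfolding lev_def by (auto simp: algebra_simps sum.distrib)
  moreover have "\<forall>g\<in>Cbar. \<forall>c::real. lev J w (\<lambda>\<alpha> x. c * g \<alpha> x) = c * lev J w g"
    unfolding lev_def by (auto simp: algebra_simps sum_distrib_left)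
  ultimately show ?thesis unfolding Cbar_dual_def by blast
qed


lemma level_ind:
  assumes "\<alpha> \<in> {0..1}"
  shows "level (indicator {p} :: 'a::euclidean_space \<Rightarrow> real) \<alpha> = {p}"
proof (cases "\<alpha> = 0")
  case True
  have "{x. (indicator {p} x :: real) > 0} = {p}" by (auto simp: indicator_def)
  then show ?thesis using True by (simp add: level_def)
next
  case False
  then have "{x. (indicator {p} x :: real) \<ge> \<alpha>} = {p}" using assms by (auto simp: indicator_def)
  then show ?thesis using False by (simp add: level_def)
qed

lemma supp_ind:
  assumes "\<alpha> \<in> {0..1}"
  shows "supp_fun (indicator {p} :: 'a::euclidean_space \<Rightarrow> real) \<alpha> x = inner x p"
  unfolding supp_fun_def level_ind[OF assms] by simp

lemma Fkc_level1_sub: "level \<nu> 1 \<subseteq> level (\<nu>::'a::euclidean_space \<Rightarrow> real) 0"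
proof
  fix x assume "x \<in> level \<nu> 1"
  then have "\<nu> x > 0" by (simp add: level_def)
  then show "x \<in> level \<nu> 0" by (simp add: level_def closure_def)
qed

lemma Fkc_level0_ne:
  assumes "Fkc \<nu>" shows "level (\<nu>::'a::euclidean_space \<Rightarrow> real) 0 \<noteq> {}"
  using assms Fkc_level1_sub[of \<nu>] unfolding Fkc_def by blast

lemma supp_ge:
  assumes "Fkc \<nu>" "a \<in> level (\<nu>::'a::euclidean_space \<Rightarrow> real) 0"
  shows "inner x a \<le> supp_fun \<nu> 0 x"
proof -
  have "compact (level \<nu> 0)" using assms(1) unfolding Fkc_def by blast
  then have "compact ((\<lambda>a. inner x a) ` level \<nu> 0)"
    by (rule compact_continuous_image[rotated]) (intro continuous_intros)
  then have "bdd_above ((\<lambda>a. inner x a) ` level \<nu> 0)"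
    by (intro bounded_imp_bdd_above compact_imp_bounded)
  then show ?thesis unfolding supp_fun_def using assms(2) by (rule cSUP_upper2) simp
qed

lemma width_nonneg:
  assumes "Fkc \<nu>"
  shows "0 \<le> supp_fun (\<nu>::'a::euclidean_space \<Rightarrow> real) 0 x + supp_fun \<nu> 0 (-x)"
proof -
  obtain a where a: "a \<in> level \<nu> 0" using Fkc_level0_ne[OF assms] by blast
  have "inner x a \<le> supp_fun \<nu> 0 x" "inner (-x) a \<le> supp_fun \<nu> 0 (-x)"
    using supp_ge[OF assms a, of x] supp_ge[OF assms a, of "-x"] by auto
  then show ?thesis by simp
qed

lemma singleton_fuzzy:
  assumes F: "Fkc \<nu>" and W: "\<forall>i\<in>Basis. supp_fun \<nu> 0 i + supp_fun \<nu> 0 (-i) = 0"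
  shows "(\<nu>::'a::euclidean_space \<Rightarrow> real) = indicator {\<Sum>i\<in>Basis. supp_fun \<nu> 0 i *\<^sub>R i}"
proof -
  define c where "c = (\<Sum>i\<in>Basis. supp_fun \<nu> 0 i *\<^sub>R i)"
  have K: "a = c" if a: "a \<in> level \<nu> 0" for a
  proof -
    have "inner a i = supp_fun \<nu> 0 i" if i: "i \<in> Basis" for i
    proof -
      have "inner i a \<le> supp_fun \<nu> 0 i" "inner (-i) a \<le> supp_fun \<nu> 0 (-i)"
        using supp_ge[OF F a, of i] supp_ge[OF F a, of "-i"] by auto
      then show ?thesis using W i by (auto simp: inner_commute)
    qed
    then have e: "\<And>i. i \<in> Basis \<Longrightarrow> inner a i *\<^sub>R i = supp_fun \<nu> 0 i *\<^sub>R i" by simp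
    have "a = (\<Sum>i\<in>Basis. inner a i *\<^sub>R i)" by (simp add: euclidean_representation)
    also have "\<dots> = c" unfolding c_def by (rule sum.cong[OF refl e])
    finally show ?thesis .
  qed
  have one: "\<nu> c = 1"
  proof -
    obtain y where y: "y \<in> level \<nu> 1" using F unfolding Fkc_def by blast
    then have "y = c" using K Fkc_level1_sub by blast
    then have "\<nu> c \<ge> 1" using y by (simp add: level_def)
    moreover have "\<nu> c \<le> 1" using F unfolding Fkc_def by blast
    ultimately show ?thesis by simp
  qed
  have zero: "\<nu> x = 0" if "x \<noteq> c" for x
  proof (rule ccontr)
    assume "\<nu> x \<noteq> 0"
    moreover have "\<nu> x \<ge> 0" using F unfolding Fkc_def by blast
    ultimately have "\<nu> x > 0" by simp
    then have "x \<in> level \<nu> 0" by (simp add: level_def closure_def)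
    then show False using K that by blast
  qed
  show ?thesis unfolding c_def[symmetric]
    by (rule ext) (use one zero in \<open>auto simp: indicator_def\<close>)
qed


lemma real_gaussian_AE:
  assumes "real_gaussian M X" "Y \<in> borel_measurable M" "AE \<omega> in M. X \<omega> = Y \<omega>"
  shows "real_gaussian M Y"
proof -
  have Xm: "X \<in> borel_measurable M" using assms(1) unfolding real_gaussian_def by blast
  have d1: "distr M borel X = distr M borel Y" by (rule distr_cong_AE) (use assms Xm in auto)
  have d2: "distr M lborel X = distr M lborel Y" by (rule distr_cong_AE) (use assms Xm in auto)
  have Yl: "Y \<in> measurable M lborel" using assms(2) by simp
  show ?thesis using assms(1) Yl assms(2) unfolding real_gaussian_def distributed_def d1 d2 by blast
qed

definition ev :: "'a \<Rightarrow> (real \<Rightarrow> 'a::euclidean_space \<Rightarrow> real) \<Rightarrow> real" where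
  "ev x = lev {x} (\<lambda>_. 1)"

definition Lf :: "'a \<Rightarrow> (real \<Rightarrow> 'a::euclidean_space \<Rightarrow> real) \<Rightarrow> real" where
  "Lf v = lev Basis (\<lambda>j. inner v j)"

lemma ev_apply[simp]: "ev x g = g 0 x" by (simp add: ev_def lev_def)

lemma Lf_apply: "Lf v g = (\<Sum>j\<in>Basis. inner v j * g 0 j)" by (simp add: Lf_def lev_def)

lemma ev_dual: "norm x = 1 \<Longrightarrow> ev x \<in> Cbar_dual"
  unfolding ev_def by (rule lev_dual) auto

lemma Lf_dual: "Lf v \<in> Cbar_dual"
  unfolding Lf_def by (rule lev_dual) auto

lemma Lf_Basis: "i \<in> Basis \<Longrightarrow> Lf i g = g 0 i"
proof -
  assume i: "i \<in> Basis"
  have "(\<Sum>j\<in>Basis. inner i j * g 0 j) = (\<Sum>j\<in>Basis. if j = i then g 0 j else 0)"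
    by (rule sum.cong) (use i in \<open>auto simp: inner_Basis\<close>)
  also have "\<dots> = g 0 i" using i by (simp add: sum.delta)
  finally show ?thesis by (simp add: Lf_apply)
qed

lemma Lf_add: "Lf (u + v) g = Lf u g + Lf v g"
  by (simp add: Lf_apply inner_add_left distrib_right sum.distrib)

lemma Lf_scale: "Lf (r *\<^sub>R u) g = r * Lf u g"
  by (simp add: Lf_apply sum_distrib_left mult.assoc)

lemma Lf_expand: "(\<Sum>i\<in>Basis. inner u i * Lf i g) = Lf u g"
proof -
  have "(\<Sum>i\<in>Basis. inner u i * Lf i g) = (\<Sum>i\<in>Basis. inner u i * g 0 i)"
    by (rule sum.cong) (simp_all add: Lf_Basis)
  then show ?thesis by (simp add: Lf_apply)
qed

lemma gvp_measurable:
  assumes "gaussian_vec_process M n Y" "t \<ge> 0" "k < n"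
  shows "Y t k \<in> borel_measurable M"
proof -
  have "gaussian_family M ({t} \<times> {..<n}) (\<lambda>(t,k). Y t k)"
    using assms unfolding gaussian_vec_process_def by auto
  then show ?thesis using assms unfolding gaussian_family_def by auto
qed

lemma gvp_two:
  assumes "gaussian_vec_process M 1 Y" "s \<ge> 0" "t \<ge> 0" "s \<noteq> t"
  shows "real_gaussian M (\<lambda>\<omega>. Y t 0 \<omega> - Y s 0 \<omega>)"
proof -
  have "gaussian_family M ({s,t} \<times> {..<1}) (\<lambda>(t,k). Y t k)"
    using assms unfolding gaussian_vec_process_def by auto
  then have "real_gaussian M (\<lambda>\<omega>. \<Sum>i\<in>{s,t} \<times> {..<1}. (\<lambda>(r,k). if r = t then 1 else -1) i * (\<lambda>(t,k). Y t k) i \<omega>)"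
    unfolding gaussian_family_def by blast
  moreover have "{s,t} \<times> {..<1::nat} = {(s,0),(t,0)}" by auto
  ultimately show ?thesis using assms(4) by simp
qed

lemma gvp_zero:
  assumes "gaussian_vec_process M 1 Y" "t \<ge> (0::real)"
  shows "real_gaussian M (\<lambda>\<omega>. 0)"
proof -
  have "gaussian_family M ({t} \<times> {..<1}) (\<lambda>(t,k). Y t k)"
    using assms unfolding gaussian_vec_process_def by auto
  then show ?thesis
    unfolding gaussian_family_def by (elim conjE) (drule spec[of _ "\<lambda>_. 0"], simp)
qed


lemma forward:
  fixes M :: "'w measure" and F :: "real \<Rightarrow> 'w measure"
    and B :: "real \<Rightarrow> 'w \<Rightarrow> ('a::euclidean_space \<Rightarrow> real)"
  assumes P: "prob_space M" and AD: "adapted_fuzzy_process M F B" and BM: "fuzzy_BM M B"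
  shows "\<exists>b :: real \<Rightarrow> 'w \<Rightarrow> 'a. wiener_process M b \<and>
       (\<forall>t\<ge>0. AE \<omega> in M. B t \<omega> = indicator {b t \<omega>})"
proof -
  interpret prob_space M by (rule P)
  define X where "X = (\<lambda>t \<omega>. supp_fun (B t \<omega>))"
  have BM': "Cbar_BM M X" using BM unfolding fuzzy_BM_def X_def .
  note BMu = BM'[unfolded Cbar_BM_def]
  note G0 = BMu[THEN conjunct1]
  note S0 = BMu[THEN conjunct2, THEN conjunct1]
  note Cen = BMu[THEN conjunct2, THEN conjunct2, THEN conjunct1]
  note Ind = BMu[THEN conjunct2, THEN conjunct2, THEN conjunct2, THEN conjunct1]
  note Cov = BMu[THEN conjunct2, THEN conjunct2, THEN conjunct2, THEN conjunct2]
  have G: "gaussian_vec_process M n (\<lambda>t k \<omega>. fs k (X t \<omega>))" if "\<And>k. k<n \<Longrightarrow> fs k \<in> Cbar_dual" for n fs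
    using G0 that by blast
  have meas: "(\<lambda>\<omega>. f (X t \<omega>)) \<in> borel_measurable M" if "f \<in> Cbar_dual" "t \<ge> 0" for f t
  proof -
    have "gaussian_vec_process M 1 (\<lambda>t k \<omega>. (\<lambda>_. f) k (X t \<omega>))" by (rule G) (use that in auto)
    from gvp_measurable[OF this \<open>t\<ge>0\<close>, of 0] show ?thesis by simp
  qed
  have cen: "integrable M (\<lambda>\<omega>. f (X t \<omega>)) \<and> expectation (\<lambda>\<omega>. f (X t \<omega>)) = 0"
    if "f \<in> Cbar_dual" "t \<ge> 0" for f t
    using Cen that by blast
  have Fk: "Fkc (B t \<omega>)" if "t \<ge> 0" "\<omega> \<in> space M" for t \<omega>
    using AD that unfolding adapted_fuzzy_process_def by blast
  have mev: "(\<lambda>\<omega>. X t \<omega> 0 i) \<in> borel_measurable M" if "i \<in> Basis" "t \<ge> 0" for i t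
    using meas[OF ev_dual, of i t] that by simp
  define b where "b = (\<lambda>t \<omega>. \<Sum>i\<in>Basis. (X t \<omega> 0 i - X 0 \<omega> 0 i) *\<^sub>R i)"
  have inner_b: "inner (b t \<omega>) v = Lf v (X t \<omega>) - Lf v (X 0 \<omega>)" for t \<omega> v
  proof -
    have "inner (b t \<omega>) v = (\<Sum>i\<in>Basis. (X t \<omega> 0 i - X 0 \<omega> 0 i) * inner i v)"
      by (simp add: b_def inner_sum_left)
    also have "\<dots> = (\<Sum>i\<in>Basis. inner v i * X t \<omega> 0 i) - (\<Sum>i\<in>Basis. inner v i * X 0 \<omega> 0 i)"
      by (simp add: sum_subtractf[symmetric] algebra_simps inner_commute)
    finally show ?thesis by (simp add: Lf_apply)
  qed
  have diff_b: "inner (b t \<omega> - b s \<omega>) u = Lf u (X t \<omega>) - Lf u (X s \<omega>)" for t s \<omega> u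
    by (simp add: inner_diff_left inner_b)
  have bmeas: "b t \<in> borel_measurable M" if "t \<ge> 0" for t
    unfolding b_def using that
    by (intro borel_measurable_sum borel_measurable_scaleR borel_measurable_diff mev borel_measurable_const) auto
  have b0: "b 0 \<omega> = 0" for \<omega> by (simp add: b_def)
  have mb: "(\<lambda>\<omega>. inner (b t \<omega>) v) \<in> borel_measurable M" if "t \<ge> 0" for t v
    unfolding inner_b by (intro borel_measurable_diff meas Lf_dual) (use that in auto)
  have AE0: "AE \<omega> in M. \<forall>i\<in>Basis. X 0 \<omega> 0 i = 0"
    using S0 by eventually_elim auto
  obtain e where e: "bij_betw e {..<DIM('a)} (Basis::'a set)"
    using ex_bij_betw_nat_finite[of "Basis::'a set"] by (auto simp: atLeast0LessThan)
  have eB: "e k \<in> Basis" if "k < DIM('a)" for k using e that by (auto simp: bij_betw_def)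
  have gf: "gaussian_family M (S \<times> Basis) (\<lambda>(t,i) \<omega>. inner (b t \<omega>) i)"
    if S: "finite S" "S \<subseteq> {0..}" for S
  proof -
    have rg: "real_gaussian M (\<lambda>\<omega>. \<Sum>p\<in>S \<times> Basis. c p * inner (b (fst p) \<omega>) (snd p))" for c
    proof -
      define fs where "fs = (\<lambda>k. ev (e k) :: (real \<Rightarrow> 'a \<Rightarrow> real) \<Rightarrow> real)"
      have fsd: "fs k \<in> Cbar_dual" if "k < DIM('a)" for k
        unfolding fs_def using eB[OF that] by (intro ev_dual) simp
      have "gaussian_vec_process M DIM('a) (\<lambda>t k \<omega>. fs k (X t \<omega>))" by (rule G) (use fsd in auto)
      then have "gaussian_family M (S \<times> {..<DIM('a)}) (\<lambda>(t,k). (\<lambda>t k \<omega>. fs k (X t \<omega>)) t k)"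
        using S unfolding gaussian_vec_process_def by blast
      then have "\<forall>c. real_gaussian M (\<lambda>\<omega>. \<Sum>i\<in>S \<times> {..<DIM('a)}. c i * (\<lambda>(t,k). (\<lambda>t k \<omega>. fs k (X t \<omega>)) t k) i \<omega>)"
        unfolding gaussian_family_def by (elim conjE)
      from spec[OF this, of "\<lambda>q. c (fst q, e (snd q))"]
      have r1: "real_gaussian M (\<lambda>\<omega>. \<Sum>q\<in>S \<times> {..<DIM('a)}. c (fst q, e (snd q)) * X (fst q) \<omega> 0 (e (snd q)))"
        by (simp add: fs_def prod.case_eq_if)
      have inj: "inj_on (map_prod id e) (S \<times> {..<DIM('a)})"
        by (rule map_prod_inj_on) (use e in \<open>auto simp: bij_betw_def\<close>)
      have img: "map_prod id e ` (S \<times> {..<DIM('a)}) = S \<times> Basis"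
        by (rule map_prod_surj_on) (use e in \<open>auto simp: bij_betw_def\<close>)
      have eq1: "(\<Sum>q\<in>S \<times> {..<DIM('a)}. c (fst q, e (snd q)) * X (fst q) \<omega> 0 (e (snd q)))
          = (\<Sum>p\<in>S \<times> Basis. c p * X (fst p) \<omega> 0 (snd p))" for \<omega>
        unfolding img[symmetric] sum.reindex[OF inj] by (simp add: comp_def map_prod_def prod.case_eq_if)
      have eq2: "AE \<omega> in M. (\<Sum>p\<in>S \<times> Basis. c p * X (fst p) \<omega> 0 (snd p))
          = (\<Sum>p\<in>S \<times> Basis. c p * inner (b (fst p) \<omega>) (snd p))"
        using AE0
      proof eventually_elim
        case (elim \<omega>)
        show ?case
          by (rule sum.cong) (use elim in \<open>auto simp: inner_b Lf_Basis\<close>)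
      qed
      show ?thesis
      proof (rule real_gaussian_AE[OF r1])
        show "(\<lambda>\<omega>. \<Sum>p\<in>S \<times> Basis. c p * inner (b (fst p) \<omega>) (snd p)) \<in> borel_measurable M"
          using S by (intro borel_measurable_sum borel_measurable_times borel_measurable_const mb) auto
        show "AE \<omega> in M. (\<Sum>q\<in>S \<times> {..<DIM('a)}. c (fst q, e (snd q)) * X (fst q) \<omega> 0 (e (snd q))) =
          (\<Sum>p\<in>S \<times> Basis. c p * inner (b (fst p) \<omega>) (snd p))"
          using eq2 by (simp add: eq1)
      qed
    qed
    show ?thesis unfolding gaussian_family_def
    proof (intro conjI allI ballI)
      fix p :: "real \<times> 'a" assume "p \<in> S \<times> Basis"
      then show "(case p of (t, i) \<Rightarrow> \<lambda>\<omega>. inner (b t \<omega>) i) \<in> borel_measurable M"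
        using S mb by (auto simp: prod.case_eq_if)
    next
      fix c
      show "real_gaussian M (\<lambda>\<omega>. \<Sum>i\<in>S \<times> Basis. c i * (case i of (t, i) \<Rightarrow> \<lambda>\<omega>. inner (b t \<omega>) i) \<omega>)"
        using rg[of c] by (simp add: prod.case_eq_if)
    qed
  qed
  have cb: "integrable M (\<lambda>\<omega>. inner (b t \<omega>) v) \<and> expectation (\<lambda>\<omega>. inner (b t \<omega>) v) = 0"
    if "t \<ge> 0" for t v
  proof -
    have i1: "integrable M (\<lambda>\<omega>. Lf v (X t \<omega>))" "expectation (\<lambda>\<omega>. Lf v (X t \<omega>)) = 0"
      using cen[OF Lf_dual that] by auto
    have i2: "integrable M (\<lambda>\<omega>. Lf v (X 0 \<omega>))" "expectation (\<lambda>\<omega>. Lf v (X 0 \<omega>)) = 0"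
      using cen[OF Lf_dual, of 0] by auto
    show ?thesis unfolding inner_b using i1 i2 by simp
  qed
  have ind: "indep_vars (\<lambda>_. borel) (\<lambda>k \<omega>. b (t (Suc k)) \<omega> - b (t k) \<omega>) {..<n}"
    if tt: "0 \<le> t 0" "\<forall>k<n. t k < t (Suc k)" for n and t :: "nat \<Rightarrow> real"
  proof -
    have tpos: "0 \<le> t k" if "k \<le> n" for k
      using that
    proof (induction k)
      case (Suc k)
      then show ?case using tt by (meson Suc_le_lessD less_eq_real_def order.trans order_less_imp_le)
    qed (use tt in simp)
    define Gen where "Gen k = {(\<lambda>\<omega>. f (\<lambda>\<alpha> x. X (t (Suc k)) \<omega> \<alpha> x - X (t k) \<omega> \<alpha> x)) -` A \<inter> space M | f A.
                f \<in> Cbar_dual \<and> A \<in> sets borel}" for k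
    have I: "indep_sets (\<lambda>k. sigma_sets (space M) (Gen k)) {..<n}"
      unfolding Gen_def using Ind tt by blast
    have Gsub: "Gen k \<subseteq> Pow (space M)" for k unfolding Gen_def by auto
    have incr_eq: "(\<lambda>\<omega>. b (t (Suc k)) \<omega> - b (t k) \<omega>)
        = (\<lambda>\<omega>. \<Sum>i\<in>Basis. (X (t (Suc k)) \<omega> 0 i - X (t k) \<omega> 0 i) *\<^sub>R i)" for k
    proof (rule ext, rule euclidean_eqI)
      fix \<omega> and j :: 'a assume j: "j \<in> Basis"
      have "inner (\<Sum>i\<in>Basis. (X (t (Suc k)) \<omega> 0 i - X (t k) \<omega> 0 i) *\<^sub>R i) j
          = (\<Sum>i\<in>Basis. (X (t (Suc k)) \<omega> 0 i - X (t k) \<omega> 0 i) * inner i j)"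
        by (simp add: inner_sum_left)
      also have "\<dots> = (\<Sum>i\<in>Basis. if i = j then X (t (Suc k)) \<omega> 0 i - X (t k) \<omega> 0 i else 0)"
        by (rule sum.cong) (use j in \<open>auto simp: inner_Basis\<close>)
      also have "\<dots> = X (t (Suc k)) \<omega> 0 j - X (t k) \<omega> 0 j" using j by (simp add: sum.delta')
      finally show "inner (b (t (Suc k)) \<omega> - b (t k) \<omega>) j
          = inner (\<Sum>i\<in>Basis. (X (t (Suc k)) \<omega> 0 i - X (t k) \<omega> 0 i) *\<^sub>R i) j"
        using j by (simp add: diff_b Lf_Basis)
    qed
    have sub: "{(\<lambda>\<omega>. b (t (Suc k)) \<omega> - b (t k) \<omega>) -` A \<inter> space M | A. A \<in> sets borel}
        \<subseteq> sigma_sets (space M) (Gen k)" for k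
    proof -
      have sp: "space (sigma (space M) (Gen k)) = space M" by (rule space_measure_of_conv)
      have st: "sets (sigma (space M) (Gen k)) = sigma_sets (space M) (Gen k)"
        by (rule sets_measure_of[OF Gsub])
      have phi: "(\<lambda>\<omega>. X (t (Suc k)) \<omega> 0 i - X (t k) \<omega> 0 i) \<in> borel_measurable (sigma (space M) (Gen k))"
        if i: "i \<in> Basis" for i
      proof (rule measurableI)
        fix A :: "real set" assume A: "A \<in> sets borel"
        have "(\<lambda>\<omega>. X (t (Suc k)) \<omega> 0 i - X (t k) \<omega> 0 i) -` A \<inter> space M \<in> Gen k"
          unfolding Gen_def mem_Collect_eq
          by (intro exI[of _ "ev i"] exI[of _ A]) (use A ev_dual[of i] i in simp)
        then show "(\<lambda>\<omega>. X (t (Suc k)) \<omega> 0 i - X (t k) \<omega> 0 i) -` A \<inter> space (sigma (space M) (Gen k))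
            \<in> sets (sigma (space M) (Gen k))"
          unfolding sp st by (rule sigma_sets.Basic)
      qed simp
      have "(\<lambda>\<omega>. b (t (Suc k)) \<omega> - b (t k) \<omega>) \<in> borel_measurable (sigma (space M) (Gen k))"
        unfolding incr_eq by (intro borel_measurable_sum borel_measurable_scaleR phi borel_measurable_const)
      then show ?thesis using measurable_sets[of _ "sigma (space M) (Gen k)" borel] unfolding sp st by blast
    qed
    show ?thesis unfolding indep_vars_def
    proof (intro conjI ballI)
      fix k assume "k \<in> {..<n}"
      then have "Suc k \<le> n" "k \<le> n" by auto
      then show "random_variable borel (\<lambda>\<omega>. b (t (Suc k)) \<omega> - b (t k) \<omega>)"
        by (intro borel_measurable_diff bmeas tpos)
    next
      show "indep_sets (\<lambda>k. sigma_sets (space M) {(\<lambda>\<omega>. b (t (Suc k)) \<omega> - b (t k) \<omega>) -` A \<inter> space M |A. A \<in> sets borel}) {..<n}"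
        by (rule indep_sets_mono_sets[OF I]) (rule sigma_sets_mono[OF sub])
    qed
  qed
  obtain R where R: "\<forall>f\<in>Cbar_dual. \<forall>g\<in>Cbar_dual. \<forall>s\<ge>0. \<forall>t\<ge>0.
        integrable M (\<lambda>\<omega>. f (X t \<omega>) * g (X s \<omega>)) \<and>
        expectation (\<lambda>\<omega>. f (X t \<omega>) * g (X s \<omega>)) = min t s * R f g"
    using Cov by blast
  have RI: "integrable M (\<lambda>\<omega>. Lf u (X t \<omega>) * Lf v (X s \<omega>))" if "s \<ge> 0" "t \<ge> 0" for u v s t
    using R Lf_dual that by blast
  have RE: "expectation (\<lambda>\<omega>. Lf u (X t \<omega>) * Lf v (X s \<omega>)) = min t s * R (Lf u) (Lf v)"
    if "s \<ge> 0" "t \<ge> 0" for u v s t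
    using R Lf_dual that by blast
  have Rlin: "R (Lf u) (Lf v) = expectation (\<lambda>\<omega>. Lf u (X 1 \<omega>) * Lf v (X 1 \<omega>))" for u v
    using RE[of 1 1 u v] by simp
  define Q where "Q v = (\<Sum>i\<in>Basis. R (Lf i) (Lf v) *\<^sub>R i)" for v :: 'a
  have QR: "inner u (Q v) = R (Lf u) (Lf v)" for u v
  proof -
    have "inner u (Q v) = (\<Sum>i\<in>Basis. inner u i * R (Lf i) (Lf v))"
      by (simp add: Q_def inner_sum_right mult.commute)
    also have "\<dots> = (\<Sum>i\<in>Basis. expectation (\<lambda>\<omega>. inner u i * (Lf i (X 1 \<omega>) * Lf v (X 1 \<omega>))))"
      by (simp add: Rlin)
    also have "\<dots> = expectation (\<lambda>\<omega>. \<Sum>i\<in>Basis. inner u i * (Lf i (X 1 \<omega>) * Lf v (X 1 \<omega>)))"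
      by (rule sym, rule Bochner_Integration.integral_sum[where f="\<lambda>i \<omega>. inner u i * (Lf i (X 1 \<omega>) * Lf v (X 1 \<omega>))"])
        (auto intro!: integrable_mult_right RI)
    also have "\<dots> = expectation (\<lambda>\<omega>. Lf u (X 1 \<omega>) * Lf v (X 1 \<omega>))"
      by (simp add: sum_distrib_right[symmetric] mult.assoc[symmetric] Lf_expand)
    finally show ?thesis by (simp add: Rlin)
  qed
  have Lf_add': "Lf (x + y) = (\<lambda>g. Lf x g + Lf y g)" for x y by (rule ext) (rule Lf_add)
  have Lf_scale': "Lf (r *\<^sub>R x) = (\<lambda>g. r * Lf x g)" for r x by (rule ext) (rule Lf_scale)
  have Radd: "R (Lf i) (Lf (x + y)) = R (Lf i) (Lf x) + R (Lf i) (Lf y)" for i x y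
    unfolding Rlin Lf_add distrib_left by (rule Bochner_Integration.integral_add) (auto intro: RI)
  have Rscale: "R (Lf i) (Lf (r *\<^sub>R x)) = r * R (Lf i) (Lf x)" for i r x
    unfolding Rlin Lf_scale by (simp add: mult.left_commute)
  have linQ: "linear Q"
  proof (rule linearI)
    show "Q (x + y) = Q x + Q y" for x y
      by (simp add: Q_def Radd scaleR_add_left sum.distrib)
    show "Q (r *\<^sub>R x) = r *\<^sub>R Q x" for r x
      by (simp add: Q_def Rscale scaleR_sum_right)
  qed
  have incr: "real_gaussian M (\<lambda>\<omega>. inner (b t \<omega> - b s \<omega>) u) \<and>
        integrable M (\<lambda>\<omega>. inner (b t \<omega> - b s \<omega>) u * inner (b t \<omega> - b s \<omega>) v) \<and>
        expectation (\<lambda>\<omega>. inner (b t \<omega> - b s \<omega>) u * inner (b t \<omega> - b s \<omega>) v)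
          = (t - s) * inner u (Q v)" if st: "0 \<le> s" "s \<le> t" for s t u v
  proof (intro conjI)
    have g1: "gaussian_vec_process M 1 (\<lambda>t k \<omega>. (\<lambda>_. Lf u) k (X t \<omega>))" by (rule G) (rule Lf_dual)
    show "real_gaussian M (\<lambda>\<omega>. inner (b t \<omega> - b s \<omega>) u)"
    proof (cases "s = t")
      case True
      then show ?thesis unfolding diff_b using gvp_zero[OF g1 st(1)] by simp
    next
      case False
      then show ?thesis unfolding diff_b using gvp_two[OF g1 st(1) _ False] st by simp
    qed
    have t0: "t \<ge> 0" using st by simp
    have ex: "inner (b t \<omega> - b s \<omega>) u * inner (b t \<omega> - b s \<omega>) v =
        Lf u (X t \<omega>) * Lf v (X t \<omega>) - Lf u (X t \<omega>) * Lf v (X s \<omega>)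
        - Lf u (X s \<omega>) * Lf v (X t \<omega>) + Lf u (X s \<omega>) * Lf v (X s \<omega>)" for \<omega>
      unfolding diff_b by (simp add: algebra_simps)
    show "integrable M (\<lambda>\<omega>. inner (b t \<omega> - b s \<omega>) u * inner (b t \<omega> - b s \<omega>) v)"
      unfolding ex using RI st t0 by simp
    have "expectation (\<lambda>\<omega>. inner (b t \<omega> - b s \<omega>) u * inner (b t \<omega> - b s \<omega>) v)
        = min t t * R (Lf u) (Lf v) - min t s * R (Lf u) (Lf v) - min s t * R (Lf u) (Lf v)
          + min s s * R (Lf u) (Lf v)"
      unfolding ex using RI[of s t] RI[of t t] RI[of s s] RI[of t s] st t0
      by (simp add: RE)
    also have "\<dots> = (t - s) * inner u (Q v)" using st by (simp add: QR min_def algebra_simps)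
    finally show "expectation (\<lambda>\<omega>. inner (b t \<omega> - b s \<omega>) u * inner (b t \<omega> - b s \<omega>) v)
          = (t - s) * inner u (Q v)" .
  qed
  have AEsing: "AE \<omega> in M. B t \<omega> = indicator {b t \<omega>}" if t0: "t \<ge> 0" for t
  proof -
    have W: "AE \<omega> in M. X t \<omega> 0 i + X t \<omega> 0 (-i) = 0" if i: "i \<in> Basis" for i
    proof -
      have c1: "integrable M (\<lambda>\<omega>. ev i (X t \<omega>))" "expectation (\<lambda>\<omega>. ev i (X t \<omega>)) = 0"
        using cen[OF ev_dual t0, of i] i by auto
      have c2: "integrable M (\<lambda>\<omega>. ev (-i) (X t \<omega>))" "expectation (\<lambda>\<omega>. ev (-i) (X t \<omega>)) = 0"
        using cen[OF ev_dual t0, of "-i"] i by auto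
      have int: "integrable M (\<lambda>\<omega>. X t \<omega> 0 i + X t \<omega> 0 (-i))" using c1 c2 by simp
      have ex0: "expectation (\<lambda>\<omega>. X t \<omega> 0 i + X t \<omega> 0 (-i)) = 0" using c1 c2 by simp
      have nn: "AE \<omega> in M. 0 \<le> X t \<omega> 0 i + X t \<omega> 0 (-i)"
        by (rule AE_I2) (use width_nonneg Fk[OF t0] in \<open>auto simp: X_def\<close>)
      show ?thesis using integral_nonneg_eq_0_iff_AE[OF int nn] ex0 by simp
    qed
    have "AE \<omega> in M. \<forall>i\<in>Basis. X t \<omega> 0 i + X t \<omega> 0 (-i) = 0"
      by (rule AE_finite_allI) (use W in auto)
    moreover note AE0
    moreover have "AE \<omega> in M. \<omega> \<in> space M" by (rule AE_space)
    ultimately show ?thesis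
    proof (eventually_elim)
      case (elim \<omega>)
      have sp: "\<omega> \<in> space M" using elim by blast
      have eq: "B t \<omega> = indicator {\<Sum>i\<in>Basis. supp_fun (B t \<omega>) 0 i *\<^sub>R i}"
        by (rule singleton_fuzzy[OF Fk[OF t0 sp]]) (use elim in \<open>auto simp: X_def\<close>)
      have "b t \<omega> = (\<Sum>i\<in>Basis. supp_fun (B t \<omega>) 0 i *\<^sub>R i)"
        unfolding b_def by (rule sum.cong) (use elim in \<open>auto simp: X_def\<close>)
      then show ?case using eq by simp
    qed
  qed
  have wp: "wiener_process M b"
    unfolding wiener_process_def
  proof (intro conjI allI impI ballI)
    show "b t \<in> borel_measurable M" if "t \<ge> 0" for t using bmeas that .
    show "b 0 \<omega> = 0" for \<omega> by (rule b0)
    show "gaussian_family M (S \<times> Basis) (\<lambda>(t, i) \<omega>. inner (b t \<omega>) i)" if "finite S \<and> S \<subseteq> {0..}" for S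
      using gf that by blast
    show "integrable M (\<lambda>\<omega>. inner (b t \<omega>) v)" if "t \<ge> 0" for t v using cb that by blast
    show "expectation (\<lambda>\<omega>. inner (b t \<omega>) v) = 0" if "t \<ge> 0" for t v using cb that by blast
    show "indep_vars (\<lambda>_. borel) (\<lambda>k \<omega>. b (t (Suc k)) \<omega> - b (t k) \<omega>) {..<n}"
      if "0 \<le> t 0 \<and> (\<forall>k<n. t k < t (Suc k))" for n t using ind that by blast
    show "\<exists>Q. linear Q \<and> (\<forall>s t u v. 0 \<le> s \<and> s \<le> t \<longrightarrow>
        real_gaussian M (\<lambda>\<omega>. inner (b t \<omega> - b s \<omega>) u) \<and>
        integrable M (\<lambda>\<omega>. inner (b t \<omega> - b s \<omega>) u * inner (b t \<omega> - b s \<omega>) v) \<and>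
        expectation (\<lambda>\<omega>. inner (b t \<omega> - b s \<omega>) u * inner (b t \<omega> - b s \<omega>) v)
          = (t - s) * inner u (Q v))"
      using linQ incr by blast
  qed
  show ?thesis using wp AEsing by blast
qed


definition wv :: "((real \<Rightarrow> 'a \<Rightarrow> real) \<Rightarrow> real) \<Rightarrow> 'a::euclidean_space" where
  "wv f = (\<Sum>i\<in>Basis. f (psi i) *\<^sub>R i)"

lemma fpsi:
  assumes f: "f \<in> Cbar_dual"
  shows "f (psi p) = inner p (wv f)"
proof -
  have dadd: "\<forall>g\<in>Cbar. \<forall>h\<in>Cbar. f (\<lambda>\<alpha> x. g \<alpha> x + h \<alpha> x) = f g + f h"
    and dsc: "\<forall>g\<in>Cbar. \<forall>c::real. f (\<lambda>\<alpha> x. c * g \<alpha> x) = c * f g"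
    using f unfolding Cbar_dual_def by blast+
  have add: "f (psi (x + y)) = f (psi x) + f (psi y)" for x y
  proof -
    have "psi (x + y) = (\<lambda>\<alpha> z. psi x \<alpha> z + psi y \<alpha> z)" by (simp add: psi_def inner_add_right)
    then show ?thesis using dadd[rule_format, OF psi_Cbar psi_Cbar] by simp
  qed
  have sc: "f (psi (r *\<^sub>R x)) = r * f (psi x)" for r x
  proof -
    have "psi (r *\<^sub>R x) = (\<lambda>\<alpha> z. r * psi x \<alpha> z)" by (simp add: psi_def)
    then show ?thesis using dsc[rule_format, OF psi_Cbar] by simp
  qed
  have lin: "linear (\<lambda>p. f (psi p))" by (rule linearI) (simp_all add: add sc)
  have "f (psi p) = f (psi (\<Sum>i\<in>Basis. (inner p i) *\<^sub>R i))" by (simp add: euclidean_representation)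
  also have "\<dots> = (\<Sum>i\<in>Basis. inner p i * f (psi i))"
    by (subst linear_sum[OF lin]) (simp add: sc)
  also have "\<dots> = inner p (wv f)" by (simp add: wv_def inner_sum_right mult.commute)
  finally show ?thesis .
qed

lemma complete_meas:
  fixes f g :: "'w \<Rightarrow> real"
  assumes "complete_measure M" "g \<in> borel_measurable M" "AE x in M. f x = g x"
  shows "f \<in> borel_measurable M"
proof (rule measurableI)
  fix A :: "real set" assume A: "A \<in> sets borel"
  have "g -` A \<inter> space M \<in> sets M" using assms(2) A by (rule measurable_sets)
  moreover have "AE x in M. x \<in> g -` A \<inter> space M \<longleftrightarrow> x \<in> f -` A \<inter> space M"
    using assms(3) by (auto elim!: eventually_mono)
  ultimately show "f -` A \<inter> space M \<in> sets M"
    using complete_measure.in_sets_AE[OF assms(1)] by blast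
qed simp

lemma backward:
  fixes M :: "'w measure" and B :: "real \<Rightarrow> 'w \<Rightarrow> ('a::euclidean_space \<Rightarrow> real)"
    and b :: "real \<Rightarrow> 'w \<Rightarrow> 'a"
  assumes P: "prob_space M" and CM: "complete_measure M" and W: "wiener_process M b"
    and AEB: "\<forall>t\<ge>0. AE \<omega> in M. B t \<omega> = indicator {b t \<omega>}"
  shows "fuzzy_BM M B"
proof -
  interpret prob_space M by (rule P)
  define X where "X = (\<lambda>t \<omega>. supp_fun (B t \<omega>))"
  note Wu = W[unfolded wiener_process_def]
  note bm = Wu[THEN conjunct1]
  note b0 = Wu[THEN conjunct2, THEN conjunct1]
  note gfam = Wu[THEN conjunct2, THEN conjunct2, THEN conjunct1]
  note cenW = Wu[THEN conjunct2, THEN conjunct2, THEN conjunct2, THEN conjunct1]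
  note indW = Wu[THEN conjunct2, THEN conjunct2, THEN conjunct2, THEN conjunct2, THEN conjunct1]
  note Qex = Wu[THEN conjunct2, THEN conjunct2, THEN conjunct2, THEN conjunct2, THEN conjunct2]
  have bmeas: "b t \<in> borel_measurable M" if "t \<ge> 0" for t using bm that by blast
  have mbi: "(\<lambda>\<omega>. inner (b t \<omega>) v) \<in> borel_measurable M" if "t \<ge> 0" for t v
    using borel_measurable_inner[OF bmeas[OF that] borel_measurable_const] .
  have XA: "AE \<omega> in M. \<forall>\<alpha>\<in>{0..1}. \<forall>x. X t \<omega> \<alpha> x = inner x (b t \<omega>)" if "t \<ge> 0" for t
    using AEB[rule_format, OF that] by (auto elim!: eventually_mono simp: X_def supp_ind)
  have fXp: "f (X t \<omega>) = inner (b t \<omega>) (wv f)"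
    if "f \<in> Cbar_dual" "\<forall>\<alpha>\<in>{0..1}. \<forall>x. X t \<omega> \<alpha> x = inner x (b t \<omega>)" for f t \<omega>
  proof -
    have "f (X t \<omega>) = f (psi (b t \<omega>))"
      by (rule dual_agree[OF that(1) psi_Cbar]) (use that(2) in \<open>simp add: psi_def\<close>)
    then show ?thesis using fpsi[OF that(1)] by simp
  qed
  have fX: "AE \<omega> in M. \<forall>f\<in>Cbar_dual. f (X t \<omega>) = inner (b t \<omega>) (wv f)" if "t \<ge> 0" for t
    using XA[OF that] by eventually_elim (use fXp in blast)
  have mf: "(\<lambda>\<omega>. f (X t \<omega>)) \<in> borel_measurable M" if "f \<in> Cbar_dual" "t \<ge> 0" for f t
    by (rule complete_meas[OF CM mbi[OF that(2), of "wv f"]]) (use fX[OF that(2)] that(1) in \<open>auto elim!: eventually_mono\<close>)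
  have gvp: "gaussian_vec_process M n (\<lambda>t k \<omega>. fs k (X t \<omega>))"
    if fs: "\<forall>k<n. fs k \<in> Cbar_dual" for n fs
    unfolding gaussian_vec_process_def
  proof (intro allI impI)
    fix S :: "real set" assume S: "finite S \<and> S \<subseteq> {0..}"
    show "gaussian_family M (S \<times> {..<n}) (\<lambda>(t, k) \<omega>. fs k (X t \<omega>))"
      unfolding gaussian_family_def
    proof (intro conjI allI ballI)
      fix p :: "real \<times> nat" assume "p \<in> S \<times> {..<n}"
      then show "(case p of (t,k) \<Rightarrow> \<lambda>\<omega>. fs k (X t \<omega>)) \<in> borel_measurable M"
        using mf fs S by (auto simp: prod.case_eq_if)
    next
      fix c :: "real \<times> nat \<Rightarrow> real"
      define c' where "c' = (\<lambda>(t,i). \<Sum>k<n. c (t,k) * inner (wv (fs k)) i)"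
      have "gaussian_family M (S \<times> Basis) (\<lambda>(t,i) \<omega>. inner (b t \<omega>) i)" using gfam S by blast
      then have rg: "real_gaussian M (\<lambda>\<omega>. \<Sum>p\<in>S \<times> Basis. c' p * (case p of (t,i) \<Rightarrow> \<lambda>\<omega>. inner (b t \<omega>) i) \<omega>)"
        unfolding gaussian_family_def by blast
      have eq: "(\<Sum>p\<in>S \<times> Basis. c' p * (case p of (t,i) \<Rightarrow> \<lambda>\<omega>. inner (b t \<omega>) i) \<omega>)
          = (\<Sum>p\<in>S \<times> {..<n}. c p * inner (b (fst p) \<omega>) (wv (fs (snd p))))" for \<omega>
      proof -
        have "(\<Sum>p\<in>S \<times> Basis. c' p * (case p of (t,i) \<Rightarrow> \<lambda>\<omega>. inner (b t \<omega>) i) \<omega>)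
            = (\<Sum>t\<in>S. \<Sum>i\<in>Basis. (\<Sum>k<n. c (t,k) * inner (wv (fs k)) i) * inner (b t \<omega>) i)"
          by (simp add: sum.cartesian_product c'_def prod.case_eq_if)
        also have "\<dots> = (\<Sum>t\<in>S. \<Sum>k<n. c (t,k) * (\<Sum>i\<in>Basis. inner (b t \<omega>) i * inner (wv (fs k)) i))"
          by (simp add: sum_distrib_left sum_distrib_right sum.swap[of _ Basis] mult_ac)
        also have "\<dots> = (\<Sum>t\<in>S. \<Sum>k<n. c (t,k) * inner (b t \<omega>) (wv (fs k)))"
          by (simp add: euclidean_inner[symmetric])
        also have "\<dots> = (\<Sum>p\<in>S \<times> {..<n}. c p * inner (b (fst p) \<omega>) (wv (fs (snd p))))"
          by (simp add: sum.cartesian_product prod.case_eq_if)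
        finally show ?thesis .
      qed
      have ae: "AE \<omega> in M. \<forall>t\<in>S. \<forall>f\<in>Cbar_dual. f (X t \<omega>) = inner (b t \<omega>) (wv f)"
        by (rule AE_finite_allI) (use S fX in auto)
      show "real_gaussian M (\<lambda>\<omega>. \<Sum>p\<in>S \<times> {..<n}. c p * (case p of (t,k) \<Rightarrow> \<lambda>\<omega>. fs k (X t \<omega>)) \<omega>)"
      proof (rule real_gaussian_AE[OF rg])
        show "(\<lambda>\<omega>. \<Sum>p\<in>S \<times> {..<n}. c p * (case p of (t,k) \<Rightarrow> \<lambda>\<omega>. fs k (X t \<omega>)) \<omega>) \<in> borel_measurable M"
          using S fs by (intro borel_measurable_sum borel_measurable_times borel_measurable_const)
             (auto simp: prod.case_eq_if intro!: mf)
        show "AE \<omega> in M. (\<Sum>p\<in>S \<times> Basis. c' p * (case p of (t,i) \<Rightarrow> \<lambda>\<omega>. inner (b t \<omega>) i) \<omega>)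
            = (\<Sum>p\<in>S \<times> {..<n}. c p * (case p of (t,k) \<Rightarrow> \<lambda>\<omega>. fs k (X t \<omega>)) \<omega>)"
          using ae
        proof eventually_elim
          case (elim \<omega>)
          show ?case unfolding eq
            by (rule sum.cong) (use elim fs in \<open>auto simp: prod.case_eq_if\<close>)
        qed
      qed
    qed
  qed
  have start: "AE \<omega> in M. \<forall>\<alpha>\<in>{0..1}. \<forall>x\<in>sphere 0 1. X 0 \<omega> \<alpha> x = 0"
    using XA[of 0, simplified] AE_space by eventually_elim (use b0 in auto)
  have cenX: "integrable M (\<lambda>\<omega>. f (X t \<omega>)) \<and> expectation (\<lambda>\<omega>. f (X t \<omega>)) = 0"
    if "t \<ge> 0" "f \<in> Cbar_dual" for t f
  proof -
    have ae: "AE \<omega> in M. inner (b t \<omega>) (wv f) = f (X t \<omega>)"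
      using fX[OF that(1)] that(2) by (auto elim!: eventually_mono)
    have c: "integrable M (\<lambda>\<omega>. inner (b t \<omega>) (wv f))" "expectation (\<lambda>\<omega>. inner (b t \<omega>) (wv f)) = 0"
      using cenW that(1) by blast+
    show ?thesis
      using integrable_cong_AE_imp[OF c(1) mf[OF that(2,1)] ae]
        integral_cong_AE[OF mbi[OF that(1)] mf[OF that(2,1)] ae] c(2) by simp
  qed
  have indX: "indep_sets (\<lambda>k. sigma_sets (space M)
      {(\<lambda>\<omega>. f (\<lambda>\<alpha> x. X (t (Suc k)) \<omega> \<alpha> x - X (t k) \<omega> \<alpha> x)) -` A \<inter> space M | f A.
                f \<in> Cbar_dual \<and> A \<in> sets borel}) {..<n}"
    if tt: "0 \<le> t 0 \<and> (\<forall>k<n. t k < t (Suc k))" for n and t :: "nat \<Rightarrow> real"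
  proof -
    have tpos: "0 \<le> t k" if "k \<le> n" for k
      using that
    proof (induction k)
      case (Suc k)
      then show ?case using tt by (meson Suc_le_lessD less_eq_real_def order.trans order_less_imp_le)
    qed (use tt in simp)
    define D where "D k \<omega> = b (t (Suc k)) \<omega> - b (t k) \<omega>" for k \<omega>
    define F where "F k = sigma_sets (space M) {D k -` A \<inter> space M | A. A \<in> sets borel}" for k
    define Gen where "Gen k = {(\<lambda>\<omega>. f (\<lambda>\<alpha> x. X (t (Suc k)) \<omega> \<alpha> x - X (t k) \<omega> \<alpha> x)) -` A \<inter> space M | f A.
                f \<in> Cbar_dual \<and> A \<in> sets borel}" for k
    have "indep_vars (\<lambda>_. borel) (\<lambda>k \<omega>. b (t (Suc k)) \<omega> - b (t k) \<omega>) {..<n}" using indW tt by blast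
    then have IF: "indep_sets F {..<n}" unfolding indep_vars_def F_def D_def by blast
    have Fev: "F k \<subseteq> events" if "k < n" for k
      using IF that unfolding indep_sets_def by blast
    have Dm: "D k \<in> borel_measurable M" if "k < n" for k
      unfolding D_def using that by (intro borel_measurable_diff bmeas tpos) auto
    define H where "H k = {A \<in> events. \<exists>A'\<in>F k. AE \<omega> in M. (\<omega> \<in> A) = (\<omega> \<in> A')}" for k
    have IH: "indep_sets H {..<n}"
    proof (rule indep_setsI)
      show "H k \<subseteq> events" for k unfolding H_def by auto
      fix A J assume J: "J \<noteq> {}" "J \<subseteq> {..<n}" "finite J" and A: "\<forall>j\<in>J. A j \<in> H j"
      then have "\<forall>j\<in>J. \<exists>A'. A' \<in> F j \<and> (AE \<omega> in M. (\<omega> \<in> A j) = (\<omega> \<in> A'))" unfolding H_def by blast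
      then obtain A' where A': "\<forall>j\<in>J. A' j \<in> F j \<and> (AE \<omega> in M. (\<omega> \<in> A j) = (\<omega> \<in> A' j))"
        by metis
      have Aev: "A j \<in> events" if "j \<in> J" for j using A that unfolding H_def by blast
      have A'ev: "A' j \<in> events" if "j \<in> J" for j using A' Fev J(2) that by blast
      have "prob (\<Inter>j\<in>J. A j) = prob (\<Inter>j\<in>J. A' j)"
      proof (rule measure_eq_AE)
        have "AE \<omega> in M. \<forall>j\<in>J. (\<omega> \<in> A j) = (\<omega> \<in> A' j)"
          by (rule AE_finite_allI[OF J(3)]) (use A' in blast)
        then show "AE \<omega> in M. (\<omega> \<in> (\<Inter>j\<in>J. A j)) = (\<omega> \<in> (\<Inter>j\<in>J. A' j))"
          by (auto elim!: eventually_mono)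
        show "(\<Inter>j\<in>J. A j) \<in> events" using J Aev by (intro sets.finite_INT) auto
        show "(\<Inter>j\<in>J. A' j) \<in> events" using J A'ev by (intro sets.finite_INT) auto
      qed
      also have "\<dots> = (\<Prod>j\<in>J. prob (A' j))"
        by (rule indep_setsD[OF IF J(2) J(1) J(3)]) (use A' in blast)
      also have "\<dots> = (\<Prod>j\<in>J. prob (A j))"
      proof (rule prod.cong[OF refl])
        fix j assume j: "j \<in> J"
        show "prob (A' j) = prob (A j)"
          by (rule measure_eq_AE) (use A' j Aev A'ev in \<open>auto elim!: eventually_mono\<close>)
      qed
      finally show "prob (\<Inter>j\<in>J. A j) = (\<Prod>j\<in>J. prob (A j))" .
    qed
    have Hsa: "sigma_algebra (space M) (H k)" for k
      unfolding sigma_algebra_iff2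
    proof (intro conjI ballI allI impI)
      show "H k \<subseteq> Pow (space M)" unfolding H_def using sets.sets_into_space by auto
      show "{} \<in> H k" unfolding H_def F_def by (auto intro!: bexI[of _ "{}"] sigma_sets.Empty)
    next
      fix s assume "s \<in> H k"
      then obtain A' where s: "s \<in> events" "A' \<in> F k" "AE \<omega> in M. (\<omega> \<in> s) = (\<omega> \<in> A')"
        unfolding H_def by blast
      have "space M - A' \<in> F k" using s(2) unfolding F_def by (rule sigma_sets.Compl)
      moreover have "AE \<omega> in M. (\<omega> \<in> space M - s) = (\<omega> \<in> space M - A')"
        using s(3) AE_space by eventually_elim auto
      ultimately show "space M - s \<in> H k" unfolding H_def using s(1) by blast
    next
      fix A :: "nat \<Rightarrow> 'w set" assume "range A \<subseteq> H k"
      then have "\<forall>i. \<exists>A'. A i \<in> events \<and> A' \<in> F k \<and> (AE \<omega> in M. (\<omega> \<in> A i) = (\<omega> \<in> A'))"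
        unfolding H_def by blast
      then obtain A' where A': "\<forall>i. A i \<in> events \<and> A' i \<in> F k \<and> (AE \<omega> in M. (\<omega> \<in> A i) = (\<omega> \<in> A' i))"
        by metis
      have "(\<Union>i. A' i) \<in> F k" unfolding F_def by (rule sigma_sets.Union) (use A' in \<open>auto simp: F_def\<close>)
      moreover have "AE \<omega> in M. \<forall>i. (\<omega> \<in> A i) = (\<omega> \<in> A' i)" unfolding AE_all_countable using A' by blast
      then have "AE \<omega> in M. (\<omega> \<in> (\<Union>i. A i)) = (\<omega> \<in> (\<Union>i. A' i))" by (auto elim!: eventually_mono)
      moreover have "(\<Union>i. A i) \<in> events" using A' by auto
      ultimately show "(\<Union>i. A i) \<in> H k" unfolding H_def by blast
    qed
    have GH: "Gen k \<subseteq> H k" if k: "k < n" for k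
    proof
      fix G assume "G \<in> Gen k"
      then obtain f A where G: "G = (\<lambda>\<omega>. f (\<lambda>\<alpha> x. X (t (Suc k)) \<omega> \<alpha> x - X (t k) \<omega> \<alpha> x)) -` A \<inter> space M"
        and f: "f \<in> Cbar_dual" and A: "A \<in> sets borel" unfolding Gen_def by blast
      have t1: "0 \<le> t (Suc k)" "0 \<le> t k" using k by (auto intro!: tpos)
      have ae: "AE \<omega> in M. f (\<lambda>\<alpha> x. X (t (Suc k)) \<omega> \<alpha> x - X (t k) \<omega> \<alpha> x) = inner (D k \<omega>) (wv f)"
        using XA[OF t1(1)] XA[OF t1(2)]
      proof eventually_elim
        case (elim \<omega>)
        have "f (\<lambda>\<alpha> x. X (t (Suc k)) \<omega> \<alpha> x - X (t k) \<omega> \<alpha> x) = f (psi (D k \<omega>))"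
          by (rule dual_agree[OF f psi_Cbar]) (use elim in \<open>simp add: psi_def D_def inner_diff_right\<close>)
        then show ?case using fpsi[OF f] by simp
      qed
      have phim: "(\<lambda>v::'a. inner v (wv f)) \<in> borel_measurable borel"
        by (intro borel_measurable_continuous_onI continuous_intros)
      define A' where "A' = D k -` ((\<lambda>v::'a. inner v (wv f)) -` A) \<inter> space M"
      have "(\<lambda>v::'a. inner v (wv f)) -` A \<in> sets borel"
        using measurable_sets[OF phim A] by simp
      then have A'F: "A' \<in> F k" unfolding A'_def F_def by (blast intro: sigma_sets.Basic)
      have A'ev: "A' \<in> events" unfolding A'_def
        using measurable_sets[OF Dm[OF k] \<open>_ -` A \<in> sets borel\<close>] .
      have aeG: "AE \<omega> in M. (\<omega> \<in> G) = (\<omega> \<in> A')"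
        using ae AE_space by eventually_elim (auto simp: G A'_def)
      have "G \<in> events"
        by (rule complete_measure.in_sets_AE[OF CM _ A'ev]) (use aeG G in \<open>auto elim!: eventually_mono\<close>)
      then show "G \<in> H k" unfolding H_def using A'F aeG by blast
    qed
    show ?thesis unfolding Gen_def[symmetric]
    proof (rule indep_sets_mono_sets[OF IH])
      fix k assume "k \<in> {..<n}"
      then show "sigma_sets (space M) (Gen k) \<subseteq> H k"
        using sigma_algebra.sigma_sets_subset[OF Hsa GH] by auto
    qed
  qed
  obtain Q where linQ: "linear Q" and QW: "\<forall>s t u v. 0 \<le> s \<and> s \<le> t \<longrightarrow>
        real_gaussian M (\<lambda>\<omega>. inner (b t \<omega> - b s \<omega>) u) \<and>
        integrable M (\<lambda>\<omega>. inner (b t \<omega> - b s \<omega>) u * inner (b t \<omega> - b s \<omega>) v) \<and>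
        expectation (\<lambda>\<omega>. inner (b t \<omega> - b s \<omega>) u * inner (b t \<omega> - b s \<omega>) v)
          = (t - s) * inner u (Q v)"
    using Qex by blast
  have b0s: "b 0 \<omega> = 0" if "\<omega> \<in> space M" for \<omega> using b0 that by blast
  have intb: "integrable M (\<lambda>\<omega>. inner (b t \<omega>) v)" "expectation (\<lambda>\<omega>. inner (b t \<omega>) v) = 0"
    if "t \<ge> 0" for t v using cenW that by blast+
  have Qsym: "inner u (Q v) = inner v (Q u)" for u v
  proof -
    have "expectation (\<lambda>\<omega>. inner (b 1 \<omega> - b 0 \<omega>) u * inner (b 1 \<omega> - b 0 \<omega>) v) = (1 - 0) * inner u (Q v)"
      using QW by simp
    moreover have "expectation (\<lambda>\<omega>. inner (b 1 \<omega> - b 0 \<omega>) v * inner (b 1 \<omega> - b 0 \<omega>) u) = (1 - 0) * inner v (Q u)"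
      using QW by simp
    ultimately show ?thesis by (simp add: mult.commute)
  qed
  have covb: "integrable M (\<lambda>\<omega>. inner (b t \<omega>) u * inner (b s \<omega>) v) \<and>
      expectation (\<lambda>\<omega>. inner (b t \<omega>) u * inner (b s \<omega>) v) = s * inner u (Q v)"
    if st: "0 \<le> s" "s \<le> t" for s t u v
  proof -
    define T1 where "T1 \<omega> = inner (b t \<omega> - b s \<omega>) u * inner (b s \<omega> - b 0 \<omega>) v" for \<omega>
    define T2 where "T2 \<omega> = inner (b s \<omega> - b 0 \<omega>) u * inner (b s \<omega> - b 0 \<omega>) v" for \<omega>
    have dec: "inner (b t \<omega>) u * inner (b s \<omega>) v = T1 \<omega> + T2 \<omega>" if "\<omega> \<in> space M" for \<omega>
      using b0s[OF that] by (simp add: T1_def T2_def inner_diff_left algebra_simps)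
    have T2: "integrable M T2" "expectation T2 = s * inner u (Q v)"
      using QW[rule_format, of 0 s u v] st unfolding T2_def by auto
    have T1: "integrable M T1 \<and> expectation T1 = 0"
    proof (cases "s = 0 \<or> s = t")
      case True
      then have "T1 = (\<lambda>\<omega>. 0)" by (auto simp: T1_def)
      then show ?thesis by simp
    next
      case False
      then have s0: "0 < s" "s < t" using st by auto
      define \<tau> :: "nat \<Rightarrow> real" where "\<tau> k = (if k = 0 then 0 else if k = 1 then s else t)" for k
      have "0 \<le> \<tau> 0 \<and> (\<forall>k<2. \<tau> k < \<tau> (Suc k))"
        using s0 by (auto simp: \<tau>_def less_Suc_eq numeral_2_eq_2)
      from indW[rule_format, OF this]
      have "indep_vars (\<lambda>_. borel) (\<lambda>k \<omega>. b (\<tau> (Suc k)) \<omega> - b (\<tau> k) \<omega>) {..<2}" .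
      then have iv: "indep_vars (\<lambda>_. borel)
          (\<lambda>k \<omega>. (\<lambda>x. inner x (if k = 0 then v else u)) (b (\<tau> (Suc k)) \<omega> - b (\<tau> k) \<omega>)) {..<2}"
        by (rule indep_vars_compose2) (intro borel_measurable_continuous_onI continuous_intros)
      have ints: "integrable M (\<lambda>\<omega>. (\<lambda>x. inner x (if k = 0 then v else u)) (b (\<tau> (Suc k)) \<omega> - b (\<tau> k) \<omega>))"
        if "k \<in> {..<2}" for k
        using that st s0 intb by (auto simp: \<tau>_def inner_diff_left less_Suc_eq)
      have e1: "expectation (\<lambda>\<omega>. inner (b t \<omega> - b s \<omega>) u) = 0"
        using intb[of t u] intb[of s u] st by (simp add: inner_diff_left)
      have prodeq: "(\<Prod>k\<in>{..<2}. (\<lambda>x. inner x (if k = 0 then v else u)) (b (\<tau> (Suc k)) \<omega> - b (\<tau> k) \<omega>))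
          = T1 \<omega>" for \<omega>
        by (simp add: \<tau>_def T1_def lessThan_Suc numeral_2_eq_2 mult_ac)
      have "integrable M T1"
        using indep_vars_integrable[OF _ iv ints] unfolding prodeq by simp
      moreover have "expectation T1 = 0"
        using indep_vars_lebesgue_integral[OF _ iv ints] e1 unfolding prodeq
        by (simp add: lessThan_Suc \<tau>_def numeral_2_eq_2)
      ultimately show ?thesis by simp
    qed
    have "integrable M (\<lambda>\<omega>. T1 \<omega> + T2 \<omega>)" using T1 T2 by simp
    then have i: "integrable M (\<lambda>\<omega>. inner (b t \<omega>) u * inner (b s \<omega>) v)"
      by (rule integrable_cong_AE_imp)
         (use st dec AE_space in \<open>auto intro!: borel_measurable_times mbi elim!: eventually_mono\<close>)
    have "expectation (\<lambda>\<omega>. inner (b t \<omega>) u * inner (b s \<omega>) v) = expectation (\<lambda>\<omega>. T1 \<omega> + T2 \<omega>)"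
      by (rule Bochner_Integration.integral_cong) (use dec in auto)
    also have "\<dots> = s * inner u (Q v)" using T1 T2 by simp
    finally show ?thesis using i by simp
  qed
  have covb': "integrable M (\<lambda>\<omega>. inner (b t \<omega>) u * inner (b s \<omega>) v) \<and>
      expectation (\<lambda>\<omega>. inner (b t \<omega>) u * inner (b s \<omega>) v) = min t s * inner u (Q v)"
    if st: "0 \<le> s" "0 \<le> t" for s t u v
  proof (cases "s \<le> t")
    case True
    then show ?thesis using covb[OF st(1) True] by (simp add: min_def)
  next
    case False
    then have c: "integrable M (\<lambda>\<omega>. inner (b s \<omega>) v * inner (b t \<omega>) u) \<and>
      expectation (\<lambda>\<omega>. inner (b s \<omega>) v * inner (b t \<omega>) u) = t * inner v (Q u)"
      using covb[OF st(2), of s v u] by simp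
    then show ?thesis using False Qsym[of u v] by (simp add: min_def mult.commute)
  qed
  have covX: "integrable M (\<lambda>\<omega>. f (X t \<omega>) * g (X s \<omega>)) \<and>
      expectation (\<lambda>\<omega>. f (X t \<omega>) * g (X s \<omega>)) = min t s * inner (wv f) (Q (wv g))"
    if fg: "f \<in> Cbar_dual" "g \<in> Cbar_dual" and st: "0 \<le> s" "0 \<le> t" for f g s t
  proof -
    have ae: "AE \<omega> in M. inner (b t \<omega>) (wv f) * inner (b s \<omega>) (wv g) = f (X t \<omega>) * g (X s \<omega>)"
      using fX[OF st(2)] fX[OF st(1)] by eventually_elim (use fg in auto)
    have m1: "(\<lambda>\<omega>. f (X t \<omega>) * g (X s \<omega>)) \<in> borel_measurable M"
      using fg st by (intro borel_measurable_times mf)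
    have m2: "(\<lambda>\<omega>. inner (b t \<omega>) (wv f) * inner (b s \<omega>) (wv g)) \<in> borel_measurable M"
      using st by (intro borel_measurable_times mbi)
    note c = covb'[OF st, of "wv f" "wv g"]
    show ?thesis
      using integrable_cong_AE_imp[OF c[THEN conjunct1] m1 ae] integral_cong_AE[OF m2 m1 ae] c by simp
  qed
  have "Cbar_BM M X"
    unfolding Cbar_BM_def
  proof (intro conjI allI impI ballI)
    show "gaussian_vec_process M n (\<lambda>t k \<omega>. fs k (X t \<omega>))" if "\<forall>k<n. fs k \<in> Cbar_dual" for n fs
      using gvp that by blast
    show "AE \<omega> in M. \<forall>\<alpha>\<in>{0..1}. \<forall>x\<in>sphere 0 1. X 0 \<omega> \<alpha> x = 0" by (rule start)
    show "integrable M (\<lambda>\<omega>. f (X t \<omega>))" if "t \<ge> 0" "f \<in> Cbar_dual" for t f using cenX that by blast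
    show "expectation (\<lambda>\<omega>. f (X t \<omega>)) = 0" if "t \<ge> 0" "f \<in> Cbar_dual" for t f using cenX that by blast
    show "indep_sets (\<lambda>k. sigma_sets (space M)
      {(\<lambda>\<omega>. f (\<lambda>\<alpha> x. X (t (Suc k)) \<omega> \<alpha> x - X (t k) \<omega> \<alpha> x)) -` A \<inter> space M | f A.
                f \<in> Cbar_dual \<and> A \<in> sets borel}) {..<n}"
      if "0 \<le> t 0 \<and> (\<forall>k<n. t k < t (Suc k))" for n and t :: "nat \<Rightarrow> real"
      using indX that by blast
    show "\<exists>R. \<forall>f\<in>Cbar_dual. \<forall>g\<in>Cbar_dual. \<forall>s\<ge>0. \<forall>t\<ge>0.
        integrable M (\<lambda>\<omega>. f (X t \<omega>) * g (X s \<omega>)) \<and>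
        expectation (\<lambda>\<omega>. f (X t \<omega>) * g (X s \<omega>)) = min t s * R f g"
      by (rule exI[of _ "\<lambda>f g. inner (wv f) (Q (wv g))"]) (use covX in blast)
  qed
  then show ?thesis unfolding fuzzy_BM_def X_def .
qed

theorem theorem1:
  fixes M :: "'w measure"
    and F :: "real \<Rightarrow> 'w measure"
    and B :: "real \<Rightarrow> 'w \<Rightarrow> ('a::euclidean_space \<Rightarrow> real)"
  assumes "prob_space M"
    and "complete_measure M"
    and "usual_filtration M F"
    and "adapted_fuzzy_process M F B"
  shows "fuzzy_BM M B \<longleftrightarrow>
    (\<exists>b :: real \<Rightarrow> 'w \<Rightarrow> 'a. wiener_process M b \<and>
       (\<forall>t\<ge>0. AE \<omega> in M. B t \<omega> = indicator {b t \<omega>}))"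
proof
  assume "fuzzy_BM M B"
  then show "\<exists>b :: real \<Rightarrow> 'w \<Rightarrow> 'a. wiener_process M b \<and>
       (\<forall>t\<ge>0. AE \<omega> in M. B t \<omega> = indicator {b t \<omega>})"
    using forward[OF assms(1) assms(4)] by blast
next
  assume "\<exists>b :: real \<Rightarrow> 'w \<Rightarrow> 'a. wiener_process M b \<and>
       (\<forall>t\<ge>0. AE \<omega> in M. B t \<omega> = indicator {b t \<omega>})"
  then obtain b :: "real \<Rightarrow> 'w \<Rightarrow> 'a" where "wiener_process M b"
    "\<forall>t\<ge>0. AE \<omega> in M. B t \<omega> = indicator {b t \<omega>}" by blast
  then show "fuzzy_BM M B" using backward[OF assms(1) assms(2)] by blast
qed

end
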